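(* Let $f:\mathcal{P}_2(H)\to U$ be absolutely continuous $L$-differentiable, $\mu_0\in\mathcal{P}_2(H)$ and $X_0\in L^2(\Omega,H)$ with $\mathcal{L}(X_0)=\mu_0$. Then for all $u\in H$ and $v\in U$, $$\langle\partial_\mu f(\mu_0)(y)u,v\rangle_U=\big\langle u,\mathbb{E}\big[D\hat f(X_0)^\ast v\mid X_0=y\big]\big\rangle_H\quad\text{for }\mu_0\text{-a.e. }y,$$ i.e. $\partial_\mu f(\mu_0)(y)^\ast v=\mathbb{E}[D\hat f(X_0)^\ast v\mid X_0=y]$ $\mu_0$-a.e.
   Context: $(\Omega,\mathcal{F},\mathbb{P})$ complete atomless probability space, $\Omega$ Polish; $H,U$ separable real Hilbert spaces. $\hat f(X)=f(\mathcal{L}(X))$ is the lift on $L^2(\Omega,H)$, and $D\hat f(X_0)^\ast:U\to L^2(\Omega,H)$ is the Hilbert adjoint of $D\hat f(X_0)\in L(L^2(\Omega,H),U)$. $f$ is absolutely continuous $L$-differentiable if $\hat f$ is Fréchet differentiable, each $D\hat f(X)$ has finite 2-variation norm $|\!|\!|L|\!|\!|_{2,\mathbb{P}}:=\sup\{\sum_i\|L(\mathbf{1}_{A_i}x_i)\|_U:A_i\in\mathcal{F}$ pairwise disjoint, $x_i\in H$, $\mathbb{E}\|\sum_i\mathbf{1}_{A_i}x_i\|^2\le1\}$, and $X\mapsto D\hat f(X)$ is continuous in this norm; then $\partial_\mu f(\mu_0)\in L^2(H,\mu_0;L(H,U))$ is the unique element with $D\hat f(X)Y=\mathbb{E}[\partial_\mu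 f(\mu_0)(X)Y]$ for all $X\sim\mu_0$ and $Y\in L^2(\Omega,H)$. *)

theory Defs
  imports "HOL-Analysis.Analysis" "HOL-Probability.Probability"
begin

definition standing_space :: "'w::polish_space measure \<Rightarrow> bool" where
  "standing_space M \<longleftrightarrow> prob_space M \<and> space M = UNIV \<and>
     (\<exists>N. sets N = sets (borel :: 'w measure) \<and> M = completion N) \<and>
     (\<forall>A\<in>sets M. measure M A > 0 \<longrightarrow>
        (\<exists>B\<in>sets M. B \<subseteq> A \<and> 0 < measure M B \<and> measure M B < measure M A))"

definition L2 :: "'w measure \<Rightarrow> ('w \<Rightarrow> 'b::{real_normed_vector, second_countable_topology}) set" where
  "L2 M = {X. X \<in> borel_measurable M \<and> integrable M (\<lambda>w. (norm (X w))\<^sup>2)}"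

definition L2norm :: "'w measure \<Rightarrow> ('w \<Rightarrow> 'b::real_normed_vector) \<Rightarrow> real" where
  "L2norm M X = sqrt (integral\<^sup>L M (\<lambda>w. (norm (X w))\<^sup>2))"

definition law :: "'w measure \<Rightarrow> ('w \<Rightarrow> 'h::topological_space) \<Rightarrow> 'h measure" where
  "law M X = distr M borel X"

definition P2 :: "'h::real_normed_vector measure set" where
  "P2 = {\<mu>. prob_space \<mu> \<and> sets \<mu> = sets borel \<and> integrable \<mu> (\<lambda>x. (norm x)\<^sup>2)}"

definition lift :: "'w measure \<Rightarrow> ('h::topological_space measure \<Rightarrow> 'u) \<Rightarrow> ('w \<Rightarrow> 'h) \<Rightarrow> 'u" where
  "lift M f X = f (law M X)"

definition bounded_linear_L2 ::
  "'w measure \<Rightarrow> (('w \<Rightarrow> 'h::{real_normed_vector, second_countable_topology}) \<Rightarrow> 'u::real_normed_vector) \<Rightarrow> bool" where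
  "bounded_linear_L2 M L \<longleftrightarrow>
     (\<forall>Y\<in>L2 M. \<forall>Z\<in>L2 M. \<forall>a b. L (\<lambda>w. a *\<^sub>R Y w + b *\<^sub>R Z w) = a *\<^sub>R L Y + b *\<^sub>R L Z) \<and>
     (\<exists>C. \<forall>Y\<in>L2 M. norm (L Y) \<le> C * L2norm M Y)"

definition frechet_L2 ::
  "'w measure \<Rightarrow> (('w \<Rightarrow> 'h::{real_normed_vector, second_countable_topology}) \<Rightarrow> 'u::real_normed_vector)
   \<Rightarrow> ('w \<Rightarrow> 'h) \<Rightarrow> (('w \<Rightarrow> 'h) \<Rightarrow> 'u) \<Rightarrow> bool" where
  "frechet_L2 M F X L \<longleftrightarrow> bounded_linear_L2 M L \<and>
     (\<forall>e>0. \<exists>d>0. \<forall>Y\<in>L2 M. L2norm M Y < d \<longrightarrow>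
        norm (F (\<lambda>w. X w + Y w) - F X - L Y) \<le> e * L2norm M Y)"

definition var2 ::
  "'w measure \<Rightarrow> (('w \<Rightarrow> 'h::real_normed_vector) \<Rightarrow> 'u::real_normed_vector) \<Rightarrow> ereal" where
  "var2 M L = (SUP (I, A, x) \<in> {(I, A, x).
        finite (I :: nat set) \<and> (\<forall>i\<in>I. A i \<in> sets M) \<and> disjoint_family_on A I \<and>
        integral\<^sup>L M (\<lambda>w. (norm (\<Sum>i\<in>I. indicator (A i) w *\<^sub>R x i))\<^sup>2) \<le> 1}.
      ereal (\<Sum>i\<in>I. norm (L (\<lambda>w. indicator (A i) w *\<^sub>R x i))))"

definition abs_cont_L_diff ::
  "'w measure \<Rightarrow> ('h::{real_normed_vector, second_countable_topology} measure \<Rightarrow> 'u::real_normed_vector)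
   \<Rightarrow> (('w \<Rightarrow> 'h) \<Rightarrow> ('w \<Rightarrow> 'h) \<Rightarrow> 'u) \<Rightarrow> bool" where
  "abs_cont_L_diff M f Df \<longleftrightarrow>
     (\<forall>X\<in>L2 M. frechet_L2 M (lift M f) X (Df X) \<and> var2 M (Df X) < \<infinity>) \<and>
     (\<forall>X\<in>L2 M. \<forall>e>0. \<exists>d>0. \<forall>X'\<in>L2 M. L2norm M (\<lambda>w. X' w - X w) < d \<longrightarrow>
         var2 M (\<lambda>Y. Df X' Y - Df X Y) < ereal e)"

definition is_L_derivative ::
  "'w measure \<Rightarrow> (('w \<Rightarrow> 'h::{real_normed_vector, second_countable_topology}) \<Rightarrow> ('w \<Rightarrow> 'h) \<Rightarrow> 'u::{banach, second_countable_topology})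
   \<Rightarrow> 'h measure \<Rightarrow> ('h \<Rightarrow> ('h \<Rightarrow>\<^sub>L 'u)) \<Rightarrow> bool" where
  "is_L_derivative M Df \<mu>0 g \<longleftrightarrow>
     g \<in> borel_measurable borel \<and> integrable \<mu>0 (\<lambda>y. (norm (g y))\<^sup>2) \<and>
     (\<forall>X\<in>L2 M. law M X = \<mu>0 \<longrightarrow>
        (\<forall>Y\<in>L2 M. Df X Y = integral\<^sup>L M (\<lambda>w. blinfun_apply (g (X w)) (Y w))))"

definition is_adjoint_at ::
  "'w measure \<Rightarrow> (('w \<Rightarrow> 'h::{real_inner, second_countable_topology}) \<Rightarrow> 'u::real_inner) \<Rightarrow> 'u \<Rightarrow> ('w \<Rightarrow> 'h) \<Rightarrow> bool" where
  "is_adjoint_at M L v Z \<longleftrightarrow> Z \<in> L2 M \<and>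
     (\<forall>Y\<in>L2 M. inner (L Y) v = integral\<^sup>L M (\<lambda>w. inner (Y w) (Z w)))"

definition is_cond_exp_given ::
  "'w measure \<Rightarrow> ('w \<Rightarrow> 'h::{banach, second_countable_topology}) \<Rightarrow> ('w \<Rightarrow> 'k::{banach, second_countable_topology})
   \<Rightarrow> ('h \<Rightarrow> 'k) \<Rightarrow> bool" where
  "is_cond_exp_given M X Z \<phi> \<longleftrightarrow> \<phi> \<in> borel_measurable borel \<and> integrable M (\<lambda>w. \<phi> (X w)) \<and>
     (\<forall>B\<in>sets borel. integral\<^sup>L M (\<lambda>w. indicator B (X w) *\<^sub>R Z w)
                    = integral\<^sup>L M (\<lambda>w. indicator B (X w) *\<^sub>R \<phi> (X w)))"

end

theory Submission
  imports Defs
begin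

lemma sq_int_imp_int:
  fixes f :: "'a \<Rightarrow> 'b::{banach, second_countable_topology}"
  assumes "finite_measure M" "f \<in> borel_measurable M" "integrable M (\<lambda>x. (norm (f x))\<^sup>2)"
  shows "integrable M f"
proof -
  interpret finite_measure M by fact
  have i: "integrable M (\<lambda>x. 1 + (norm (f x))\<^sup>2)" using assms(3) by (intro Bochner_Integration.integrable_add) auto
  have b: "\<And>x. norm (f x) \<le> norm (1 + (norm (f x))\<^sup>2)"
  proof -
    fix x
    have "norm (f x) \<le> 1 + (norm (f x))\<^sup>2"
    proof -
      have "0 \<le> (norm (f x) - 1)\<^sup>2" by simp
      then have "2 * norm (f x) \<le> 1 + (norm (f x))\<^sup>2" by (simp add: power2_eq_square algebra_simps)
      then show ?thesis using norm_ge_zero[of "f x"] by linarith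
    qed
    then show "norm (f x) \<le> norm (1 + (norm (f x))\<^sup>2)" by simp
  qed
  show ?thesis
    by (rule Bochner_Integration.integrable_bound[OF i assms(2)]) (use b in auto)
qed

lemma meas_apply:
  "(\<lambda>L::'a::real_normed_vector \<Rightarrow>\<^sub>L 'b::real_normed_vector. blinfun_apply L u) \<in> borel_measurable borel"
  by (intro borel_measurable_continuous_onI continuous_intros)

lemma int_ind:
  fixes f :: "'a \<Rightarrow> 'b::{banach, second_countable_topology}"
  assumes fi: "integrable M f" and [measurable]: "X \<in> measurable M N" "A \<in> sets N"
  shows "integrable M (\<lambda>w. indicator A (X w) *\<^sub>R f w)"
proof (rule Bochner_Integration.integrable_bound[OF fi])
  have [measurable]: "f \<in> borel_measurable M" using fi by simp
  show "(\<lambda>w. indicator A (X w) *\<^sub>R f w) \<in> borel_measurable M" by measurable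
  show "AE x in M. norm (indicator A (X x) *\<^sub>R f x) \<le> norm (f x)"
    by (rule AE_I2) (simp add: indicator_def)
qed

theorem lemma3p11:
  fixes M :: "'w::polish_space measure"
    and f :: "'h::{real_inner, banach, second_countable_topology} measure \<Rightarrow> 'u::{real_inner, banach, second_countable_topology}"
    and Df :: "('w \<Rightarrow> 'h) \<Rightarrow> ('w \<Rightarrow> 'h) \<Rightarrow> 'u"
    and \<mu>0 :: "'h measure"
    and X0 :: "'w \<Rightarrow> 'h"
    and g :: "'h \<Rightarrow> ('h \<Rightarrow>\<^sub>L 'u)"
  assumes "standing_space M"
    and "abs_cont_L_diff M f Df"
    and "\<mu>0 \<in> P2"
    and "X0 \<in> L2 M"
    and "law M X0 = \<mu>0"
    and "is_L_derivative M Df \<mu>0 g"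
  shows "\<forall>v Z \<phi>. is_adjoint_at M (Df X0) v Z \<longrightarrow> is_cond_exp_given M X0 Z \<phi> \<longrightarrow>
           (\<forall>u. AE y in \<mu>0. inner (blinfun_apply (g y) u) v = inner u (\<phi> y))"
proof (intro allI impI)
  fix v Z \<phi> u
  assume adj: "is_adjoint_at M (Df X0) v Z" and ce: "is_cond_exp_given M X0 Z \<phi>"
  interpret prob_space M using assms(1) by (simp add: standing_space_def)
  have X0m[measurable]: "X0 \<in> borel_measurable M" using assms(4) by (simp add: L2_def)
  have mu: "\<mu>0 = distr M borel X0" using assms(5) by (simp add: law_def)
  have gm[measurable]: "g \<in> borel_measurable borel" and gsq: "integrable \<mu>0 (\<lambda>y. (norm (g y))\<^sup>2)"
    and Dfe: "\<And>Y. Y \<in> L2 M \<Longrightarrow> Df X0 Y = integral\<^sup>L M (\<lambda>w. blinfun_apply (g (X0 w)) (Y w))"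
    using assms(6) assms(4) assms(5) by (auto simp: is_L_derivative_def)
  have phim[measurable]: "\<phi> \<in> borel_measurable borel" and phii: "integrable M (\<lambda>w. \<phi> (X0 w))"
    and ceq: "\<And>B. B \<in> sets borel \<Longrightarrow> integral\<^sup>L M (\<lambda>w. indicator B (X0 w) *\<^sub>R Z w)
                    = integral\<^sup>L M (\<lambda>w. indicator B (X0 w) *\<^sub>R \<phi> (X0 w))"
    using ce by (auto simp: is_cond_exp_given_def)
  have ZL2: "Z \<in> L2 M" and adjeq: "\<And>Y. Y \<in> L2 M \<Longrightarrow> inner (Df X0 Y) v = integral\<^sup>L M (\<lambda>w. inner (Y w) (Z w))"
    using adj by (auto simp: is_adjoint_at_def)
  have Zm[measurable]: "Z \<in> borel_measurable M" using ZL2 by (simp add: L2_def)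
  have Zi: "integrable M Z"
    using ZL2 by (intro sq_int_imp_int[OF finite_measure_axioms Zm]) (simp add: L2_def)
  have gsqm: "(\<lambda>y. (norm (g y))\<^sup>2) \<in> borel_measurable borel" by measurable
  have "integrable (distr M borel X0) (\<lambda>y. (norm (g y))\<^sup>2)" using gsq mu by simp
  then have gsqM: "integrable M (\<lambda>w. (norm (g (X0 w)))\<^sup>2)"
    using integrable_distr_eq[OF X0m gsqm] by simp
  have guMm: "(\<lambda>w. blinfun_apply (g (X0 w)) u) \<in> borel_measurable M"
    using measurable_compose[OF measurable_compose[OF X0m gm] meas_apply[of u]] by (simp add: o_def)
  have guM: "integrable M (\<lambda>w. blinfun_apply (g (X0 w)) u)"
  proof (rule Bochner_Integration.integrable_bound[OF _ guMm])
    show "integrable M (\<lambda>w. (1 + (norm (g (X0 w)))\<^sup>2) * norm u)"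
      using gsqM by (intro integrable_mult_left Bochner_Integration.integrable_add) auto
    show "AE w in M. norm (blinfun_apply (g (X0 w)) u) \<le> norm ((1 + (norm (g (X0 w)))\<^sup>2) * norm u)"
    proof (rule AE_I2)
      fix w
      have t: "norm (g (X0 w)) \<le> 1 + (norm (g (X0 w)))\<^sup>2"
      proof -
        have "0 \<le> (norm (g (X0 w)) - 1)\<^sup>2" by simp
        then have "2 * norm (g (X0 w)) \<le> 1 + (norm (g (X0 w)))\<^sup>2" by (simp add: power2_eq_square algebra_simps)
        then show ?thesis using norm_ge_zero[of "g (X0 w)"] by linarith
      qed
      have "norm (blinfun_apply (g (X0 w)) u) \<le> norm (g (X0 w)) * norm u" by (rule norm_blinfun)
      also have "\<dots> \<le> (1 + (norm (g (X0 w)))\<^sup>2) * norm u" by (rule mult_right_mono[OF t norm_ge_zero])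
      finally show "norm (blinfun_apply (g (X0 w)) u) \<le> norm ((1 + (norm (g (X0 w)))\<^sup>2) * norm u)"
        by simp
    qed
  qed
  define h where "h y = inner (blinfun_apply (g y) u) v - inner u (\<phi> y)" for y
  have gum[measurable]: "(\<lambda>y. blinfun_apply (g y) u) \<in> borel_measurable borel"
    using measurable_compose[OF gm meas_apply[of u]] by (simp add: o_def)
  have hm[measurable]: "h \<in> borel_measurable borel" unfolding h_def by measurable
  have hiM: "integrable M (\<lambda>w. h (X0 w))"
    unfolding h_def using guM phii by auto
  have hi: "integrable \<mu>0 h"
    unfolding mu by (subst integrable_distr_eq) (use hiM in auto)
  have "prob_space \<mu>0" unfolding mu by (rule prob_space_distr) simp
  then have sf: "sigma_finite_measure \<mu>0" by (rule prob_space_imp_sigma_finite)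
  show "AE y in \<mu>0. inner (blinfun_apply (g y) u) v = inner u (\<phi> y)"
  proof -
    have "AE y in \<mu>0. h y = 0"
    proof (rule sigma_finite_measure.density_zero[OF sf hi])
      fix A assume A: "A \<in> sets \<mu>0"
      then have Ab[measurable]: "A \<in> sets borel" unfolding mu by simp
      define Y where "Y w = indicator A (X0 w) *\<^sub>R u" for w
      have Ym[measurable]: "Y \<in> borel_measurable M" unfolding Y_def by measurable
      have YL2: "Y \<in> L2 M"
        unfolding L2_def
      proof (intro CollectI conjI Ym)
        show "integrable M (\<lambda>w. (norm (Y w))\<^sup>2)"
          by (rule Bochner_Integration.integrable_bound[where f="\<lambda>w. (norm u)\<^sup>2"]) (auto simp: Y_def indicator_def)
      qed
      have 1: "inner (Df X0 Y) v = (\<integral>w. indicator A (X0 w) * inner (blinfun_apply (g (X0 w)) u) v \<partial>M)"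
      proof -
        have "Df X0 Y = (\<integral>w. indicator A (X0 w) *\<^sub>R blinfun_apply (g (X0 w)) u \<partial>M)"
          unfolding Dfe[OF YL2] Y_def by (simp add: blinfun.scaleR_right)
        also have "inner \<dots> v = (\<integral>w. inner (indicator A (X0 w) *\<^sub>R blinfun_apply (g (X0 w)) u) v \<partial>M)"
          by (rule integral_inner_left[symmetric]) (use int_ind[OF guM X0m Ab] in auto)
        finally show ?thesis by simp
      qed
      have 2: "inner (Df X0 Y) v = (\<integral>w. indicator A (X0 w) * inner u (\<phi> (X0 w)) \<partial>M)"
      proof -
        have "inner (Df X0 Y) v = (\<integral>w. inner u (indicator A (X0 w) *\<^sub>R Z w) \<partial>M)"
          unfolding adjeq[OF YL2] Y_def by simp
        also have "\<dots> = inner u (\<integral>w. indicator A (X0 w) *\<^sub>R Z w \<partial>M)"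
          by (rule integral_inner_right) (use int_ind[OF Zi X0m Ab] in auto)
        also have "\<dots> = inner u (\<integral>w. indicator A (X0 w) *\<^sub>R \<phi> (X0 w) \<partial>M)"
          using ceq[OF Ab] by simp
        also have "\<dots> = (\<integral>w. inner u (indicator A (X0 w) *\<^sub>R \<phi> (X0 w)) \<partial>M)"
          by (rule integral_inner_right[symmetric]) (use int_ind[OF phii X0m Ab] in auto)
        finally show ?thesis by simp
      qed
      have "set_lebesgue_integral \<mu>0 A h = (\<integral>w. indicator A (X0 w) *\<^sub>R h (X0 w) \<partial>M)"
        unfolding set_lebesgue_integral_def mu by (rule integral_distr) auto
      also have "\<dots> = (\<integral>w. indicator A (X0 w) * inner (blinfun_apply (g (X0 w)) u) v
                         - indicator A (X0 w) * inner u (\<phi> (X0 w)) \<partial>M)"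
        by (simp add: h_def right_diff_distrib)
      also have "\<dots> = 0"
      proof -
        have gv: "integrable M (\<lambda>w. inner (blinfun_apply (g (X0 w)) u) v)" using guM by auto
        have pv: "integrable M (\<lambda>w. inner u (\<phi> (X0 w)))" using phii by auto
        show ?thesis
          using 1 2 int_ind[OF gv X0m Ab] int_ind[OF pv X0m Ab]
          by (subst Bochner_Integration.integral_diff) auto
      qed
      finally show "set_lebesgue_integral \<mu>0 A h = 0" .
    qed
    then show ?thesis by eventually_elim (simp add: h_def)
  qed
qed

end
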